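(* Let $M,N$ be indecomposable non-projective $A_n^\ell$-modules and let $f\in\mathrm{Hom}(M,N)$ be nonzero with $\mathrm{Im} f=\mathrm{rad}^t(N)$, where $t$ is an integer such that there is no epimorphism from $M$ onto $\mathrm{rad}^s(N)$ for any $s<t$. Then $\underline{f}=0$ if and only if $\underline{\mathrm{Hom}}(M,N)=0$.
   Context: $A_n^\ell=kQ/I$ ($k$ algebraically closed), $Q$ the cyclic quiver with vertices $1,\dots,n$ and arrows $i\to i+1$, $n\to 1$, $I$ generated by all paths of length $\ell+1$. $\underline{\mathrm{Hom}}(M,N)$ is $\mathrm{Hom}(M,N)$ modulo morphisms factoring through projective modules, and $\underline{f}$ is the class of $f$ there. *)

theory Defs
  imports "Jordan_Normal_Form.Matrix" "HOL-Computational_Algebra.Polynomial"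
begin

text \<open>Finite-dimensional modules over the Nakayama algebra A_n^l = kQ/I, Q the cyclic
quiver with vertices 0,...,n-1 and arrows i -> (i+1) mod n, I generated by all paths of
length l+1, are represented as quiver representations: a vector space k^(dims V i) at
each vertex i and a matrix (maps V i) for the arrow i -> (i+1) mod n.\<close>

record 'a rep =
  dims :: "nat \<Rightarrow> nat"
  maps :: "nat \<Rightarrow> 'a mat"

definition alg_closed_type :: "'a::field itself \<Rightarrow> bool" where
  "alg_closed_type _ \<longleftrightarrow> (\<forall>p :: 'a poly. degree p > 0 \<longrightarrow> (\<exists>x. poly p x = 0))"

definition nxt :: "nat \<Rightarrow> nat \<Rightarrow> nat" where
  "nxt n i = (i + 1) mod n"

fun path_map :: "nat \<Rightarrow> 'a::field rep \<Rightarrow> nat \<Rightarrow> nat \<Rightarrow> 'a mat" where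
  "path_map n V 0 i = 1\<^sub>m (dims V i)"
| "path_map n V (Suc k) i = maps V ((i + k) mod n) * path_map n V k i"

definition is_rep :: "nat \<Rightarrow> nat \<Rightarrow> 'a::field rep \<Rightarrow> bool" where
  "is_rep n l V \<longleftrightarrow>
     (\<forall>i<n. maps V i \<in> carrier_mat (dims V (nxt n i)) (dims V i)) \<and>
     (\<forall>i<n. path_map n V (Suc l) i = 0\<^sub>m (dims V ((i + Suc l) mod n)) (dims V i))"

definition is_hom :: "nat \<Rightarrow> 'a::field rep \<Rightarrow> 'a rep \<Rightarrow> (nat \<Rightarrow> 'a mat) \<Rightarrow> bool" where
  "is_hom n V W F \<longleftrightarrow>
     (\<forall>i<n. F i \<in> carrier_mat (dims W i) (dims V i)) \<and>
     (\<forall>i<n. F (nxt n i) * maps V i = maps W i * F i)"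

definition zero_mor :: "nat \<Rightarrow> 'a::field rep \<Rightarrow> 'a rep \<Rightarrow> (nat \<Rightarrow> 'a mat) \<Rightarrow> bool" where
  "zero_mor n V W F \<longleftrightarrow> (\<forall>i<n. F i = 0\<^sub>m (dims W i) (dims V i))"

definition id_hom :: "nat \<Rightarrow> 'a::field rep \<Rightarrow> (nat \<Rightarrow> 'a mat) \<Rightarrow> bool" where
  "id_hom n V F \<longleftrightarrow> (\<forall>i<n. F i = 1\<^sub>m (dims V i))"

definition indecomposable :: "nat \<Rightarrow> nat \<Rightarrow> 'a::field rep \<Rightarrow> bool" where
  "indecomposable n l V \<longleftrightarrow> is_rep n l V \<and> (\<exists>i<n. dims V i > 0) \<and>
     (\<forall>E. is_hom n V V E \<and> (\<forall>i<n. E i * E i = E i) \<longrightarrow> zero_mor n V V E \<or> id_hom n V E)"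

definition surj_hom :: "nat \<Rightarrow> 'a::field rep \<Rightarrow> 'a rep \<Rightarrow> (nat \<Rightarrow> 'a mat) \<Rightarrow> bool" where
  "surj_hom n V W F \<longleftrightarrow>
     (\<forall>i<n. \<forall>y \<in> carrier_vec (dims W i). \<exists>x \<in> carrier_vec (dims V i). F i *\<^sub>v x = y)"

definition projective :: "nat \<Rightarrow> nat \<Rightarrow> 'a::field rep \<Rightarrow> bool" where
  "projective n l P \<longleftrightarrow> is_rep n l P \<and>
     (\<forall>X Y g h. is_rep n l X \<and> is_rep n l Y \<and> is_hom n X Y g \<and> surj_hom n X Y g \<and> is_hom n P Y h
        \<longrightarrow> (\<exists>h'. is_hom n P X h' \<and> (\<forall>i<n. g i * h' i = h i)))"

definition img :: "'a::field rep \<Rightarrow> (nat \<Rightarrow> 'a mat) \<Rightarrow> nat \<Rightarrow> 'a vec set" where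
  "img V F i = {F i *\<^sub>v x | x. x \<in> carrier_vec (dims V i)}"

text \<open>rad^t(N) = J^t N; at vertex i it is the image of the unique path of length t ending at i.\<close>
definition radpow :: "nat \<Rightarrow> 'a::field rep \<Rightarrow> nat \<Rightarrow> nat \<Rightarrow> 'a vec set" where
  "radpow n N t i = (let j = (i + t * n - t) mod n in
     {path_map n N t j *\<^sub>v x | x. x \<in> carrier_vec (dims N j)})"

definition stably_zero :: "nat \<Rightarrow> nat \<Rightarrow> 'a::field rep \<Rightarrow> 'a rep \<Rightarrow> (nat \<Rightarrow> 'a mat) \<Rightarrow> bool" where
  "stably_zero n l M N f \<longleftrightarrow>
     (\<exists>P g h. projective n l P \<and> is_hom n M P g \<and> is_hom n P N h \<and> (\<forall>i<n. f i = h i * g i))"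

definition stable_hom_zero :: "nat \<Rightarrow> nat \<Rightarrow> 'a::field rep \<Rightarrow> 'a rep \<Rightarrow> bool" where
  "stable_hom_zero n l M N \<longleftrightarrow> (\<forall>g. is_hom n M N g \<longrightarrow> stably_zero n l M N g)"

end

theory Submission
  imports Defs "HOL-Number_Theory.Cong"
begin

abbreviation act :: "nat \<Rightarrow> 'a::field rep \<Rightarrow> nat \<Rightarrow> nat \<Rightarrow> 'a vec \<Rightarrow> 'a vec" where
  "act n V p k z \<equiv> path_map n V p k *\<^sub>v z"

lemma mod_cancel_right:
  fixes a b p n :: nat
  assumes "(a + p) mod n = (b + p) mod n"
  shows "a mod n = b mod n"
  using assms by (metis cong_add_rcancel_nat cong_def)

lemma zero_mat_mult_vec[simp]: "v \<in> carrier_vec c \<Longrightarrow> 0\<^sub>m r c *\<^sub>v v = 0\<^sub>v r"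
  by (intro eq_vecI) (auto simp: scalar_prod_def)

lemma mat_mult_zero_vec[simp]: "A \<in> carrier_mat r c \<Longrightarrow> A *\<^sub>v 0\<^sub>v c = 0\<^sub>v r"
  by (intro eq_vecI) auto

lemma mult_vec_index:
  assumes "A \<in> carrier_mat m d" "w \<in> carrier_vec d" "r < m"
  shows "(A *\<^sub>v w) $ r = (\<Sum>c<d. A $$ (r,c) * w $ c)"
  using assms by (auto simp: scalar_prod_def lessThan_atLeast0)

lemma mat_eq_on_vecs:
  fixes A B :: "'a::field mat"
  assumes "A \<in> carrier_mat m d" "B \<in> carrier_mat m d"
    and "\<And>w. w \<in> carrier_vec d \<Longrightarrow> A *\<^sub>v w = B *\<^sub>v w"
  shows "A = B"
proof (intro eq_matI)
  fix i j assume i: "i < dim_row B" and j: "j < dim_col B"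
  have "(A *\<^sub>v unit_vec d j) $ i = (B *\<^sub>v unit_vec d j) $ i" using assms(3)[of "unit_vec d j"] by simp
  then show "A $$ (i,j) = B $$ (i,j)" using assms(1,2) i j by simp
qed (use assms in auto)

lemma mult_vec_sum:
  fixes A :: "'a::field mat"
  assumes A: "A \<in> carrier_mat m d" and S: "finite S" and u: "\<And>p. p \<in> S \<Longrightarrow> u p \<in> carrier_vec d"
  shows "A *\<^sub>v vec d (\<lambda>r. \<Sum>p\<in>S. c p * u p $ r) = vec m (\<lambda>r. \<Sum>p\<in>S. c p * (A *\<^sub>v u p) $ r)"
proof (intro eq_vecI)
  fix r assume r: "r < dim_vec (vec m (\<lambda>r. \<Sum>p\<in>S. c p * (A *\<^sub>v u p) $ r))"
  then have r: "r < m" by simp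
  have "(A *\<^sub>v vec d (\<lambda>r. \<Sum>p\<in>S. c p * u p $ r)) $ r = (\<Sum>j<d. A $$ (r,j) * (\<Sum>p\<in>S. c p * u p $ j))"
    using A r by (simp add: scalar_prod_def lessThan_atLeast0)
  also have "\<dots> = (\<Sum>j<d. \<Sum>p\<in>S. c p * (A $$ (r,j) * u p $ j))"
    by (simp add: sum_distrib_left ac_simps)
  also have "\<dots> = (\<Sum>p\<in>S. c p * (\<Sum>j<d. A $$ (r,j) * u p $ j))"
    by (subst sum.swap) (simp add: sum_distrib_left)
  also have "\<dots> = (\<Sum>p\<in>S. c p * (A *\<^sub>v u p) $ r)"
  proof (intro sum.cong refl arg_cong[where f="\<lambda>x. c _ * x"])
    fix p assume p: "p \<in> S"
    then have "dim_vec (u p) = d" using u by auto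
    then show "(\<Sum>j<d. A $$ (r,j) * u p $ j) = (A *\<^sub>v u p) $ r"
      using A r by (auto simp: scalar_prod_def lessThan_atLeast0)
  qed
  finally show "(A *\<^sub>v vec d (\<lambda>r. \<Sum>p\<in>S. c p * u p $ r)) $ r = vec m (\<lambda>r. \<Sum>p\<in>S. c p * (A *\<^sub>v u p) $ r) $ r"
    using r by simp
qed (use A in auto)

context
  fixes n :: nat
  assumes npos: "0 < n"
begin

lemma path_carrier:
  assumes rep: "is_rep n l V" and k: "k < n"
  shows "path_map n V p k \<in> carrier_mat (dims V ((k+p) mod n)) (dims V k)"
proof (induction p)
  case 0
  then show ?case using k by simp
next
  case (Suc p)
  have "maps V ((k+p) mod n) \<in> carrier_mat (dims V (nxt n ((k+p) mod n))) (dims V ((k+p) mod n))"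
    using rep npos unfolding is_rep_def by auto
  moreover have "nxt n ((k+p) mod n) = (k + Suc p) mod n" unfolding nxt_def by (simp add: mod_Suc_eq)
  ultimately show ?case using Suc by (auto simp: add.commute)
qed

lemma act_carrier:
  assumes rep: "is_rep n l V" and k: "k < n" and z: "z \<in> carrier_vec (dims V k)"
  shows "act n V p k z \<in> carrier_vec (dims V ((k+p) mod n))"
  by (rule mult_mat_vec_carrier[OF path_carrier[OF rep k] z])

lemma path_add:
  assumes rep: "is_rep n l V" and k: "k < n"
  shows "path_map n V (a+b) k = path_map n V b ((k+a) mod n) * path_map n V a k"
proof (induction b)
  case 0
  then show ?case using path_carrier[OF rep k, of a] by simp
next
  case (Suc b)
  have ka: "(k+a) mod n < n" using npos by simp
  have m: "maps V ((k+(a+b)) mod n) \<in> carrier_mat (dims V (nxt n ((k+(a+b)) mod n))) (dims V ((k+(a+b)) mod n))"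
    using rep npos unfolding is_rep_def by auto
  have e: "((k + a) mod n + b) mod n = (k + (a+b)) mod n" by (simp add: mod_add_left_eq add.assoc)
  have "path_map n V (a + Suc b) k = maps V ((k+(a+b)) mod n) * path_map n V (a+b) k" by simp
  also have "\<dots> = maps V ((k+(a+b)) mod n) * (path_map n V b ((k+a) mod n) * path_map n V a k)" using Suc by simp
  also have "\<dots> = (maps V ((k+(a+b)) mod n) * path_map n V b ((k+a) mod n)) * path_map n V a k"
    using m path_carrier[OF rep ka, of b] path_carrier[OF rep k, of a] e
    by (intro assoc_mult_mat[symmetric]) auto
  also have "\<dots> = path_map n V (Suc b) ((k+a) mod n) * path_map n V a k" using e by simp
  finally show ?case .
qed

lemma act_add:
  assumes rep: "is_rep n l V" and k: "k < n" and z: "z \<in> carrier_vec (dims V k)"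
  shows "act n V (a+b) k z = act n V b ((k+a) mod n) (act n V a k z)"
proof -
  have ka: "(k+a) mod n < n" using npos by simp
  show ?thesis
    using path_add[OF rep k, of a b] path_carrier[OF rep ka, of b] path_carrier[OF rep k, of a] z
    by (metis assoc_mult_mat_vec)
qed

lemma path_1: "path_map n V 1 k = maps V (k mod n) * 1\<^sub>m (dims V k)"
  by simp

lemma hom_path:
  assumes rV: "is_rep n l V" and rW: "is_rep n l W" and F: "is_hom n V W F" and k: "k < n"
  shows "F ((k+p) mod n) * path_map n V p k = path_map n W p k * F k"
proof (induction p)
  case 0
  have "F k \<in> carrier_mat (dims W k) (dims V k)" using F k unfolding is_hom_def by auto
  then show ?case using k by simp
next
  case (Suc p)
  let ?q = "(k+p) mod n"
  have q: "?q < n" using npos by simp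
  have nq: "nxt n ?q = (k + Suc p) mod n" unfolding nxt_def by (simp add: mod_Suc_eq)
  have Fq: "F (nxt n ?q) \<in> carrier_mat (dims W (nxt n ?q)) (dims V (nxt n ?q))" using F npos unfolding is_hom_def nxt_def by auto
  have Fq': "F ?q \<in> carrier_mat (dims W ?q) (dims V ?q)" using F q unfolding is_hom_def by auto
  have Fk: "F k \<in> carrier_mat (dims W k) (dims V k)" using F k unfolding is_hom_def by auto
  have mV: "maps V ?q \<in> carrier_mat (dims V (nxt n ?q)) (dims V ?q)" using rV q unfolding is_rep_def by auto
  have mW: "maps W ?q \<in> carrier_mat (dims W (nxt n ?q)) (dims W ?q)" using rW q unfolding is_rep_def by auto
  have com: "F (nxt n ?q) * maps V ?q = maps W ?q * F ?q" using F q unfolding is_hom_def by auto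
  have pV: "path_map n V p k \<in> carrier_mat (dims V ?q) (dims V k)" using path_carrier[OF rV k] by auto
  have pW: "path_map n W p k \<in> carrier_mat (dims W ?q) (dims W k)" using path_carrier[OF rW k] by auto
  have "F ((k + Suc p) mod n) * path_map n V (Suc p) k = F (nxt n ?q) * (maps V ?q * path_map n V p k)"
    using nq by (simp add: add.commute)
  also have "\<dots> = (F (nxt n ?q) * maps V ?q) * path_map n V p k" using Fq mV pV by simp
  also have "\<dots> = (maps W ?q * F ?q) * path_map n V p k" using com by simp
  also have "\<dots> = maps W ?q * (F ?q * path_map n V p k)" using mW Fq' pV by simp
  also have "\<dots> = maps W ?q * (path_map n W p k * F k)" using Suc by simp
  also have "\<dots> = (maps W ?q * path_map n W p k) * F k" using mW pW Fk by simp
  also have "\<dots> = path_map n W (Suc p) k * F k" by (simp add: add.commute)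
  finally show ?case .
qed

lemma hom_act:
  assumes rV: "is_rep n l V" and rW: "is_rep n l W" and F: "is_hom n V W F" and k: "k < n"
    and z: "z \<in> carrier_vec (dims V k)"
  shows "F ((k+p) mod n) *\<^sub>v act n V p k z = act n W p k (F k *\<^sub>v z)"
proof -
  have q: "(k+p) mod n < n" using npos by simp
  have Fq: "F ((k+p) mod n) \<in> carrier_mat (dims W ((k+p) mod n)) (dims V ((k+p) mod n))" using F q unfolding is_hom_def by auto
  have Fk: "F k \<in> carrier_mat (dims W k) (dims V k)" using F k unfolding is_hom_def by auto
  show ?thesis using hom_path[OF rV rW F k, of p] path_carrier[OF rV k, of p] path_carrier[OF rW k, of p] Fq Fk z
    by (metis assoc_mult_mat_vec)
qed


definition Pset :: "nat \<Rightarrow> nat \<Rightarrow> nat \<Rightarrow> nat \<Rightarrow> nat set" where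
  "Pset n' i h k = {p. p \<le> h \<and> (k+p) mod n' = (i+h) mod n'}"

definition phi :: "'a::field mat \<Rightarrow> 'a vec \<Rightarrow> 'a" where
  "phi R z = (R *\<^sub>v z) $ 0"

definition gcons :: "nat \<Rightarrow> 'a::field rep \<Rightarrow> 'a rep \<Rightarrow> nat \<Rightarrow> nat \<Rightarrow> 'a mat \<Rightarrow> 'a vec \<Rightarrow> nat \<Rightarrow> 'a mat" where
  "gcons n' V Y i h R y k = mat (dims Y k) (dims V k)
     (\<lambda>(r,c). \<Sum>p\<in>Pset n' i h k. (R * path_map n' V p k) $$ (0,c) * (act n' Y (h-p) i y) $ r)"

lemma Pset_finite: "finite (Pset n' i h k)"
  unfolding Pset_def by auto

lemma Pset_vert:
  assumes k: "k < n" and p: "p \<in> Pset n i h k"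
  shows "(i + (h-p)) mod n = k"
proof -
  have "p \<le> h" and e: "(k+p) mod n = (i+h) mod n" using p unfolding Pset_def by auto
  then have "(i + (h-p) + p) mod n = (k + p) mod n" by simp
  then have "(i + (h-p)) mod n = k mod n" by (rule mod_cancel_right)
  then show ?thesis using k by simp
qed

lemma phi_zero[simp]: "R \<in> carrier_mat 1 d \<Longrightarrow> phi R (0\<^sub>v d) = 0"
  unfolding phi_def by simp

lemma gcons_carrier: "gcons n V Y i h R y k \<in> carrier_mat (dims Y k) (dims V k)"
  unfolding gcons_def by simp

lemma gcons_mult:
  assumes rV: "is_rep n l V" and rY: "is_rep n l Y" and i: "i < n" and k: "k < n"
    and R: "R \<in> carrier_mat 1 (dims V ((i+h) mod n))"
    and y: "y \<in> carrier_vec (dims Y i)" and w: "w \<in> carrier_vec (dims V k)"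
  shows "gcons n V Y i h R y k *\<^sub>v w =
    vec (dims Y k) (\<lambda>r. \<Sum>p\<in>Pset n i h k. phi R (act n V p k w) * (act n Y (h-p) i y) $ r)"
proof (intro eq_vecI)
  fix r assume "r < dim_vec (vec (dims Y k) (\<lambda>r. \<Sum>p\<in>Pset n i h k. phi R (act n V p k w) * (act n Y (h-p) i y) $ r))"
  then have r: "r < dims Y k" by simp
  have RP: "R * path_map n V p k \<in> carrier_mat 1 (dims V k)" if "p \<in> Pset n i h k" for p
    using that path_carrier[OF rV k, of p] R unfolding Pset_def by auto
  have "(gcons n V Y i h R y k *\<^sub>v w) $ r =
      (\<Sum>c<dims V k. (\<Sum>p\<in>Pset n i h k. (R * path_map n V p k) $$ (0,c) * (act n Y (h-p) i y) $ r) * w $ c)"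
    using r w unfolding gcons_def by (simp add: scalar_prod_def lessThan_atLeast0)
  also have "\<dots> = (\<Sum>p\<in>Pset n i h k. (act n Y (h-p) i y) $ r * (\<Sum>c<dims V k. (R * path_map n V p k) $$ (0,c) * w $ c))"
    by (simp add: sum_distrib_left sum_distrib_right ac_simps sum.swap[of _ _ "Pset n i h k"])
  also have "\<dots> = (\<Sum>p\<in>Pset n i h k. phi R (act n V p k w) * (act n Y (h-p) i y) $ r)"
  proof (intro sum.cong refl)
    fix p assume p: "p \<in> Pset n i h k"
    have "(\<Sum>c<dims V k. (R * path_map n V p k) $$ (0,c) * w $ c) = ((R * path_map n V p k) *\<^sub>v w) $ 0"
      using mult_vec_index[OF RP[OF p] w, of 0] by simp
    also have "\<dots> = phi R (act n V p k w)"
      unfolding phi_def using p path_carrier[OF rV k, of p] R w unfolding Pset_def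
      by (subst assoc_mult_mat_vec) auto
    finally show "(act n Y (h-p) i y) $ r * (\<Sum>c<dims V k. (R * path_map n V p k) $$ (0,c) * w $ c) =
        phi R (act n V p k w) * (act n Y (h-p) i y) $ r" by simp
  qed
  finally show "(gcons n V Y i h R y k *\<^sub>v w) $ r = vec (dims Y k) (\<lambda>r. \<Sum>p\<in>Pset n i h k. phi R (act n V p k w) * (act n Y (h-p) i y) $ r) $ r"
    using r by simp
qed (simp add: gcons_def)


lemma path_Suc_act:
  assumes rV: "is_rep n l V" and i: "i < n" and q: "(i + a) mod n = k"
    and z: "z \<in> carrier_vec (dims V i)"
  shows "maps V k *\<^sub>v act n V a i z = act n V (Suc a) i z"
proof -
  have k: "k < n" using q npos by auto
  have m: "maps V k \<in> carrier_mat (dims V (nxt n k)) (dims V k)" using rV k unfolding is_rep_def by auto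
  show ?thesis using path_carrier[OF rV i, of a] q m z by (simp add: add.commute)
qed

lemma act_one:
  assumes rV: "is_rep n l V" and k: "k < n" and z: "z \<in> carrier_vec (dims V k)"
  shows "act n V 1 k z = maps V k *\<^sub>v z"
proof -
  have m: "maps V k \<in> carrier_mat (dims V (nxt n k)) (dims V k)" using rV k unfolding is_rep_def by auto
  show ?thesis using m z k by simp
qed

lemma gcons_hom:
  fixes V Y :: "'a::field rep"
  assumes rV: "is_rep n l V" and rY: "is_rep n l Y" and i: "i < n"
    and R: "R \<in> carrier_mat 1 (dims V ((i+h) mod n))"
    and y: "y \<in> carrier_vec (dims Y i)"
    and killV: "\<And>k z. k < n \<Longrightarrow> z \<in> carrier_vec (dims V k) \<Longrightarrow> act n V (Suc h) k z = 0\<^sub>v (dims V ((k + Suc h) mod n))"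
    and killy: "act n Y (Suc h) i y = 0\<^sub>v (dims Y ((i + Suc h) mod n))"
  shows "is_hom n V Y (gcons n V Y i h R y)"
  unfolding is_hom_def
proof (intro conjI allI impI)
  fix k assume k: "k < n"
  show "gcons n V Y i h R y k \<in> carrier_mat (dims Y k) (dims V k)" by (rule gcons_carrier)
  let ?k1 = "nxt n k"
  have k1: "?k1 < n" "?k1 = (k+1) mod n" using npos unfolding nxt_def by auto
  have mV: "maps V k \<in> carrier_mat (dims V ?k1) (dims V k)" using rV k unfolding is_rep_def by auto
  have mY: "maps Y k \<in> carrier_mat (dims Y ?k1) (dims Y k)" using rY k unfolding is_rep_def by auto
  let ?j = "(i+h) mod n"
  show "gcons n V Y i h R y ?k1 * maps V k = maps Y k * gcons n V Y i h R y k"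
  proof (rule mat_eq_on_vecs)
    show "gcons n V Y i h R y ?k1 * maps V k \<in> carrier_mat (dims Y ?k1) (dims V k)"
      by (rule mult_carrier_mat[OF gcons_carrier mV])
    show "maps Y k * gcons n V Y i h R y k \<in> carrier_mat (dims Y ?k1) (dims V k)"
      by (rule mult_carrier_mat[OF mY gcons_carrier])
    fix w :: "'a vec" assume w: "w \<in> carrier_vec (dims V k)"
    define f where "f q = (\<lambda>r. phi R (act n V q k w) * (act n Y (Suc h - q) i y) $ r)" for q
    have mw: "maps V k *\<^sub>v w \<in> carrier_vec (dims V ?k1)" using mV w by auto
    have L: "(gcons n V Y i h R y ?k1 * maps V k) *\<^sub>v w =
       vec (dims Y ?k1) (\<lambda>r. \<Sum>p\<in>Pset n i h ?k1. f (Suc p) r)"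
    proof -
      have "(gcons n V Y i h R y ?k1 * maps V k) *\<^sub>v w = gcons n V Y i h R y ?k1 *\<^sub>v (maps V k *\<^sub>v w)"
        using mV w gcons_carrier by (metis assoc_mult_mat_vec)
      also have "\<dots> = vec (dims Y ?k1) (\<lambda>r. \<Sum>p\<in>Pset n i h ?k1. phi R (act n V p ?k1 (maps V k *\<^sub>v w)) * (act n Y (h-p) i y) $ r)"
        by (rule gcons_mult[OF rV rY i k1(1) R y mw])
      also have "\<dots> = vec (dims Y ?k1) (\<lambda>r. \<Sum>p\<in>Pset n i h ?k1. f (Suc p) r)"
      proof -
        have "act n V p ?k1 (maps V k *\<^sub>v w) = act n V (Suc p) k w" for p
          using act_add[OF rV k w, of 1 p] act_one[OF rV k w] k1(2) by simp
        then show ?thesis unfolding f_def by simp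
      qed
      finally show ?thesis .
    qed
    have R': "(maps Y k * gcons n V Y i h R y k) *\<^sub>v w =
       vec (dims Y ?k1) (\<lambda>r. \<Sum>q\<in>Pset n i h k. f q r)"
    proof -
      have u: "act n Y (h-p) i y \<in> carrier_vec (dims Y k)" if "p \<in> Pset n i h k" for p
        using act_carrier[OF rY i y, of "h-p"] Pset_vert[OF k that] by simp
      have "(maps Y k * gcons n V Y i h R y k) *\<^sub>v w = maps Y k *\<^sub>v (gcons n V Y i h R y k *\<^sub>v w)"
        using mY w gcons_carrier by (metis assoc_mult_mat_vec)
      also have "\<dots> = maps Y k *\<^sub>v vec (dims Y k) (\<lambda>r. \<Sum>p\<in>Pset n i h k. phi R (act n V p k w) * (act n Y (h-p) i y) $ r)"
        by (simp add: gcons_mult[OF rV rY i k R y w])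
      also have "\<dots> = vec (dims Y ?k1) (\<lambda>r. \<Sum>p\<in>Pset n i h k. phi R (act n V p k w) * (maps Y k *\<^sub>v act n Y (h-p) i y) $ r)"
        by (rule mult_vec_sum[OF mY Pset_finite u])
      also have "\<dots> = vec (dims Y ?k1) (\<lambda>r. \<Sum>q\<in>Pset n i h k. f q r)"
      proof -
        have "maps Y k *\<^sub>v act n Y (h-p) i y = act n Y (Suc h - p) i y" if "p \<in> Pset n i h k" for p
          using path_Suc_act[OF rY i Pset_vert[OF k that] y] that unfolding Pset_def
          by (simp add: Suc_diff_le)
        then show ?thesis unfolding f_def by (intro eq_vecI) auto
      qed
      finally show ?thesis .
    qed
    define Q where "Q = {q. 1 \<le> q \<and> q \<le> h \<and> (k+q) mod n = ?j}"
    have e1: "(\<Sum>p\<in>Pset n i h ?k1. f (Suc p) r) = (\<Sum>q\<in>Q. f q r)" if r: "r < dims Y ?k1" for r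
    proof -
      have "(\<Sum>p\<in>Pset n i h ?k1. f (Suc p) r) = (\<Sum>q\<in>Suc ` Pset n i h ?k1. f q r)"
        by (simp add: sum.reindex)
      also have "\<dots> = (\<Sum>q\<in>Q. f q r)"
      proof (rule sum.mono_neutral_right)
        show "finite (Suc ` Pset n i h ?k1)" using Pset_finite by auto
        show "Q \<subseteq> Suc ` Pset n i h ?k1"
        proof
          fix q assume q: "q \<in> Q"
          then have "q = Suc (q - 1)" "q - 1 \<le> h" unfolding Q_def by auto
          moreover have "(?k1 + (q-1)) mod n = ?j"
          proof -
            have "(?k1 + (q-1)) mod n = ((k+1) + (q-1)) mod n" unfolding k1(2) by (rule mod_add_left_eq)
            also have "(k+1) + (q-1) = k + q" using q unfolding Q_def by auto
            finally show ?thesis using q unfolding Q_def by auto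
          qed
          ultimately show "q \<in> Suc ` Pset n i h ?k1" unfolding Pset_def by blast
        qed
        show "\<forall>q\<in>Suc ` Pset n i h ?k1 - Q. f q r = 0"
        proof
          fix q assume q: "q \<in> Suc ` Pset n i h ?k1 - Q"
          then obtain p where p: "p \<in> Pset n i h ?k1" "q = Suc p" by auto
          have c: "(k + Suc p) mod n = ?j" using p(1) k1(2) unfolding Pset_def by (simp add: mod_add_left_eq)
          then have "p = h" using p q unfolding Pset_def Q_def by auto
          then have "act n V q k w = 0\<^sub>v (dims V ?j)" using killV[OF k w] p c by simp
          then show "f q r = 0" unfolding f_def using R by simp
        qed
      qed
      finally show ?thesis .
    qed
    have e2: "(\<Sum>q\<in>Pset n i h k. f q r) = (\<Sum>q\<in>Q. f q r)" if r: "r < dims Y ?k1" for r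
    proof (rule sum.mono_neutral_right)
      show "finite (Pset n i h k)" by (rule Pset_finite)
      show "Q \<subseteq> Pset n i h k" unfolding Q_def Pset_def by auto
      show "\<forall>q\<in>Pset n i h k - Q. f q r = 0"
      proof
        fix q assume q: "q \<in> Pset n i h k - Q"
        then have q0: "q = 0" unfolding Pset_def Q_def by auto
        have c: "k mod n = ?j" using q q0 unfolding Pset_def by auto
        have "(i + Suc h) mod n = ?k1" using c k k1(2) by (simp add: mod_Suc_eq)
        then have "act n Y (Suc h - q) i y = 0\<^sub>v (dims Y ?k1)" using killy q0 by simp
        then show "f q r = 0" unfolding f_def using r by simp
      qed
    qed
    show "(gcons n V Y i h R y ?k1 * maps V k) *\<^sub>v w = (maps Y k * gcons n V Y i h R y k) *\<^sub>v w"
      unfolding L R' using e1 e2 by (intro eq_vecI) auto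
  qed
qed


lemma gcons_at:
  fixes V Y :: "'a::field rep"
  assumes rV: "is_rep n l V" and rY: "is_rep n l Y" and i: "i < n"
    and R: "R \<in> carrier_mat 1 (dims V ((i+h) mod n))"
    and y: "y \<in> carrier_vec (dims Y i)" and v: "v \<in> carrier_vec (dims V i)"
    and norm: "\<And>p. p \<in> Pset n i h i \<Longrightarrow> phi R (act n V p i v) = (if p = h then 1 else 0)"
  shows "gcons n V Y i h R y i *\<^sub>v v = y"
proof -
  have hP: "h \<in> Pset n i h i" unfolding Pset_def by auto
  have "gcons n V Y i h R y i *\<^sub>v v = vec (dims Y i) (\<lambda>r. \<Sum>p\<in>Pset n i h i. phi R (act n V p i v) * (act n Y (h-p) i y) $ r)"
    by (rule gcons_mult[OF rV rY i i R y v])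
  also have "\<dots> = vec (dims Y i) (\<lambda>r. \<Sum>p\<in>Pset n i h i. if p = h then (act n Y (h-p) i y) $ r else 0)"
    using norm by (intro eq_vecI) (auto intro!: sum.cong)
  also have "\<dots> = vec (dims Y i) (\<lambda>r. (act n Y 0 i y) $ r)"
    using hP Pset_finite by (simp add: sum.delta')
  also have "\<dots> = y" using y i by auto
  finally show ?thesis .
qed

lemma norm_nonzero:
  fixes V :: "'a::field rep"
  assumes rV: "is_rep n l V" and i: "i < n"
    and R: "R \<in> carrier_mat 1 (dims V ((i+h) mod n))"
    and v: "v \<in> carrier_vec (dims V i)"
    and norm: "\<And>p. p \<in> Pset n i h i \<Longrightarrow> phi R (act n V p i v) = (if p = h then 1 else 0)"
  shows "v \<noteq> 0\<^sub>v (dims V i)"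
proof
  assume v0: "v = 0\<^sub>v (dims V i)"
  have hP: "h \<in> Pset n i h i" unfolding Pset_def by auto
  have "act n V h i v = 0\<^sub>v (dims V ((i+h) mod n))" using v0 path_carrier[OF rV i, of h] by simp
  then have "phi R (act n V h i v) = 0" using R by simp
  then show False using norm[OF hP] by simp
qed

lemma struct_id:
  fixes V :: "'a::field rep"
  assumes ind: "indecomposable n l V" and i: "i < n"
    and R: "R \<in> carrier_mat 1 (dims V ((i+h) mod n))"
    and v: "v \<in> carrier_vec (dims V i)"
    and norm: "\<And>p. p \<in> Pset n i h i \<Longrightarrow> phi R (act n V p i v) = (if p = h then 1 else 0)"
    and killV: "\<And>k z. k < n \<Longrightarrow> z \<in> carrier_vec (dims V k) \<Longrightarrow> act n V (Suc h) k z = 0\<^sub>v (dims V ((k + Suc h) mod n))"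
  shows "k < n \<Longrightarrow> gcons n V V i h R v k = 1\<^sub>m (dims V k)"
proof -
  have rV: "is_rep n l V" using ind unfolding indecomposable_def by auto
  let ?E = "gcons n V V i h R v"
  have hom: "is_hom n V V ?E" by (rule gcons_hom[OF rV rV i R v killV killV[OF i v]])
  have Ev: "?E i *\<^sub>v v = v" by (rule gcons_at[OF rV rV i R v v norm])
  have idem: "?E k * ?E k = ?E k" if k: "k < n" for k
  proof (rule mat_eq_on_vecs)
    show "?E k * ?E k \<in> carrier_mat (dims V k) (dims V k)" by (rule mult_carrier_mat[OF gcons_carrier gcons_carrier])
    show "?E k \<in> carrier_mat (dims V k) (dims V k)" by (rule gcons_carrier)
    fix w :: "'a vec" assume w: "w \<in> carrier_vec (dims V k)"
    have u: "act n V (h-p) i v \<in> carrier_vec (dims V k)" if "p \<in> Pset n i h k" for p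
      using act_carrier[OF rV i v, of "h-p"] Pset_vert[OF k that] by simp
    have "(?E k * ?E k) *\<^sub>v w = ?E k *\<^sub>v (?E k *\<^sub>v w)"
      using w gcons_carrier by (metis assoc_mult_mat_vec)
    also have "\<dots> = ?E k *\<^sub>v vec (dims V k) (\<lambda>r. \<Sum>p\<in>Pset n i h k. phi R (act n V p k w) * (act n V (h-p) i v) $ r)"
      by (simp add: gcons_mult[OF rV rV i k R v w])
    also have "\<dots> = vec (dims V k) (\<lambda>r. \<Sum>p\<in>Pset n i h k. phi R (act n V p k w) * (?E k *\<^sub>v act n V (h-p) i v) $ r)"
      by (rule mult_vec_sum[OF gcons_carrier Pset_finite u])
    also have "\<dots> = vec (dims V k) (\<lambda>r. \<Sum>p\<in>Pset n i h k. phi R (act n V p k w) * (act n V (h-p) i v) $ r)"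
    proof -
      have "?E k *\<^sub>v act n V (h-p) i v = act n V (h-p) i v" if "p \<in> Pset n i h k" for p
        using hom_act[OF rV rV hom i v, of "h-p"] Pset_vert[OF k that] Ev by simp
      then show ?thesis by (intro eq_vecI) auto
    qed
    also have "\<dots> = ?E k *\<^sub>v w" by (simp add: gcons_mult[OF rV rV i k R v w])
    finally show "(?E k * ?E k) *\<^sub>v w = ?E k *\<^sub>v w" .
  qed
  have "zero_mor n V V ?E \<or> id_hom n V ?E" using ind hom idem unfolding indecomposable_def by blast
  moreover have "\<not> zero_mor n V V ?E"
  proof
    assume "zero_mor n V V ?E"
    then have "?E i = 0\<^sub>m (dims V i) (dims V i)" using i unfolding zero_mor_def by auto
    then have "v = 0\<^sub>v (dims V i)" using Ev v by simp
    then show False using norm_nonzero[OF rV i R v norm] by simp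
  qed
  ultimately have "id_hom n V ?E" by simp
  then show "k < n \<Longrightarrow> ?E k = 1\<^sub>m (dims V k)" unfolding id_hom_def by auto
qed

lemma hom_det:
  fixes V Y :: "'a::field rep"
  assumes ind: "indecomposable n l V" and rY: "is_rep n l Y" and i: "i < n"
    and R: "R \<in> carrier_mat 1 (dims V ((i+h) mod n))"
    and v: "v \<in> carrier_vec (dims V i)"
    and norm: "\<And>p. p \<in> Pset n i h i \<Longrightarrow> phi R (act n V p i v) = (if p = h then 1 else 0)"
    and killV: "\<And>k z. k < n \<Longrightarrow> z \<in> carrier_vec (dims V k) \<Longrightarrow> act n V (Suc h) k z = 0\<^sub>v (dims V ((k + Suc h) mod n))"
    and F: "is_hom n V Y F" and k: "k < n"
  shows "F k = gcons n V Y i h R (F i *\<^sub>v v) k"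
proof -
  have rV: "is_rep n l V" using ind unfolding indecomposable_def by auto
  have Fk: "F k \<in> carrier_mat (dims Y k) (dims V k)" using F k unfolding is_hom_def by auto
  have Fi: "F i \<in> carrier_mat (dims Y i) (dims V i)" using F i unfolding is_hom_def by auto
  have y: "F i *\<^sub>v v \<in> carrier_vec (dims Y i)" using Fi v by auto
  let ?E = "gcons n V V i h R v"
  have E1: "?E k = 1\<^sub>m (dims V k)" by (rule struct_id[OF ind i R v norm killV k])
  show ?thesis
  proof (rule mat_eq_on_vecs[OF Fk gcons_carrier])
    fix w :: "'a vec" assume w: "w \<in> carrier_vec (dims V k)"
    have u: "act n V (h-p) i v \<in> carrier_vec (dims V k)" if "p \<in> Pset n i h k" for p
      using act_carrier[OF rV i v, of "h-p"] Pset_vert[OF k that] by simp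
    have "F k *\<^sub>v w = F k *\<^sub>v (?E k *\<^sub>v w)" using E1 w by simp
    also have "\<dots> = F k *\<^sub>v vec (dims V k) (\<lambda>r. \<Sum>p\<in>Pset n i h k. phi R (act n V p k w) * (act n V (h-p) i v) $ r)"
      by (simp add: gcons_mult[OF rV rV i k R v w])
    also have "\<dots> = vec (dims Y k) (\<lambda>r. \<Sum>p\<in>Pset n i h k. phi R (act n V p k w) * (F k *\<^sub>v act n V (h-p) i v) $ r)"
      by (rule mult_vec_sum[OF Fk Pset_finite u])
    also have "\<dots> = vec (dims Y k) (\<lambda>r. \<Sum>p\<in>Pset n i h k. phi R (act n V p k w) * (act n Y (h-p) i (F i *\<^sub>v v)) $ r)"
    proof -
      have "F k *\<^sub>v act n V (h-p) i v = act n Y (h-p) i (F i *\<^sub>v v)" if "p \<in> Pset n i h k" for p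
        using hom_act[OF rV rY F i v, of "h-p"] Pset_vert[OF k that] by simp
      then show ?thesis by (intro eq_vecI) auto
    qed
    also have "\<dots> = gcons n V Y i h R (F i *\<^sub>v v) k *\<^sub>v w" by (simp add: gcons_mult[OF rV rY i k R y w])
    finally show "F k *\<^sub>v w = gcons n V Y i h R (F i *\<^sub>v v) k *\<^sub>v w" .
  qed
qed


lemma act_beyond:
  fixes V :: "'a::field rep"
  assumes rV: "is_rep n l V" and i: "i < n" and v: "v \<in> carrier_vec (dims V i)"
    and kv: "act n V (Suc h) i v = 0\<^sub>v (dims V ((i + Suc h) mod n))"
    and q: "h < q"
  shows "act n V q i v = 0\<^sub>v (dims V ((i + q) mod n))"
proof -
  obtain e where e: "q = Suc h + e" using less_imp_Suc_add[OF q] by auto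
  have ih: "(i + Suc h) mod n < n" using npos by simp
  have "act n V q i v = act n V e ((i + Suc h) mod n) (act n V (Suc h) i v)"
    unfolding e by (rule act_add[OF rV i v])
  also have "\<dots> = 0\<^sub>v (dims V (((i + Suc h) mod n + e) mod n))"
    unfolding kv by (rule mat_mult_zero_vec[OF path_carrier[OF rV ih]])
  also have "((i + Suc h) mod n + e) mod n = (i + q) mod n" unfolding e by (simp add: mod_add_left_eq add.assoc)
  finally show ?thesis .
qed

lemma phi_row:
  fixes R :: "'a::field mat"
  assumes "R \<in> carrier_mat 1 d" "z \<in> carrier_vec d"
  shows "phi R z = (\<Sum>c<d. R $$ (0,c) * z $ c)"
  unfolding phi_def using mult_vec_index[OF assms, of 0] by simp

lemma norm_exists:
  fixes V :: "'a::field rep"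
  assumes rV: "is_rep n l V" and i: "i < n" and v: "v \<in> carrier_vec (dims V i)"
    and hv: "act n V h i v \<noteq> 0\<^sub>v (dims V ((i+h) mod n))"
    and kv: "act n V (Suc h) i v = 0\<^sub>v (dims V ((i + Suc h) mod n))"
  shows "\<exists>R \<in> carrier_mat 1 (dims V ((i+h) mod n)). \<forall>p\<in>Pset n i h i. phi R (act n V p i v) = (if p = h then 1 else 0)"
proof -
  define j where "j = (i+h) mod n"
  define d where "d = dims V j"
  define x where "x = act n V h i v"
  have j: "j < n" unfolding j_def using npos by simp
  have x: "x \<in> carrier_vec d" unfolding x_def d_def j_def by (rule act_carrier[OF rV i v])
  have x0: "x \<noteq> 0\<^sub>v d" using hv unfolding x_def d_def j_def .
  obtain r0 where r0: "r0 < d" "x $ r0 \<noteq> 0"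
  proof -
    { assume "\<forall>r<d. x $ r = 0"
      then have "x = 0\<^sub>v d" using x by (intro eq_vecI) auto
      with x0 have False by simp }
    then show ?thesis using that by blast
  qed
  have actc: "act n V p i v \<in> carrier_vec d" if "p \<in> Pset n i h i" for p
    using act_carrier[OF rV i v, of p] that unfolding Pset_def d_def j_def by simp
  have claim: "\<exists>R \<in> carrier_mat 1 d. phi R x = 1 \<and> (\<forall>p\<in>Pset n i h i. h - K \<le> p \<longrightarrow> p \<noteq> h \<longrightarrow> phi R (act n V p i v) = 0)" for K
  proof (induction K)
    case 0
    define R0 where "R0 = mat 1 d (\<lambda>(_,c). if c = r0 then inverse (x $ r0) else 0)"
    have R0: "R0 \<in> carrier_mat 1 d" unfolding R0_def by simp
    have "phi R0 x = (\<Sum>c<d. R0 $$ (0,c) * x $ c)" by (rule phi_row[OF R0 x])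
    also have "\<dots> = (\<Sum>c<d. if c = r0 then inverse (x $ r0) * x $ c else 0)"
      unfolding R0_def by (intro sum.cong) auto
    also have "\<dots> = 1" using r0 by (simp add: sum.delta')
    finally have "phi R0 x = 1" .
    moreover have "\<forall>p\<in>Pset n i h i. h - 0 \<le> p \<longrightarrow> p \<noteq> h \<longrightarrow> phi R0 (act n V p i v) = 0"
      unfolding Pset_def by auto
    ultimately show ?case using R0 by blast
  next
    case (Suc K)
    then obtain R where R: "R \<in> carrier_mat 1 d" and Rx: "phi R x = 1"
      and RK: "\<And>p. p \<in> Pset n i h i \<Longrightarrow> h - K \<le> p \<Longrightarrow> p \<noteq> h \<Longrightarrow> phi R (act n V p i v) = 0" by blast
    show ?case
    proof (cases "Suc K \<le> h \<and> h - Suc K \<in> Pset n i h i")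
      case False
      have "phi R (act n V p i v) = 0" if "p \<in> Pset n i h i" "h - Suc K \<le> p" "p \<noteq> h" for p
      proof (cases "h - K \<le> p")
        case True then show ?thesis using RK that by auto
      next
        case False
        then have "p = h - Suc K" "Suc K \<le> h" using that by auto
        then show ?thesis using \<open>\<not> (Suc K \<le> h \<and> h - Suc K \<in> Pset n i h i)\<close> that by auto
      qed
      then show ?thesis using R Rx by blast
    next
      case True
      define p0 where "p0 = h - Suc K"
      define dd where "dd = Suc K"
      have p0: "p0 \<in> Pset n i h i" "p0 + dd = h" using True unfolding p0_def dd_def by auto
      have jp0: "(i + p0) mod n = j" using p0 unfolding Pset_def j_def by auto
      have jdd: "(j + dd) mod n = j"
      proof -
        have "(j + dd) mod n = ((i + p0) mod n + dd) mod n" using jp0 by simp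
        also have "\<dots> = (i + p0 + dd) mod n" by (rule mod_add_left_eq)
        finally have "(j + dd) mod n = (i + p0 + dd) mod n" .
        then show ?thesis using p0(2) unfolding j_def by (simp add: add.assoc)
      qed
      define c where "c = phi R (act n V p0 i v)"
      define P where "P = path_map n V dd j"
      have P: "P \<in> carrier_mat d d"
      proof -
        have "P \<in> carrier_mat (dims V ((j+dd) mod n)) (dims V j)" unfolding P_def by (rule path_carrier[OF rV j])
        then show ?thesis unfolding jdd d_def .
      qed
      define R' where "R' = mat 1 d (\<lambda>(_,col). R $$ (0,col) - c * (R * P) $$ (0,col))"
      have R': "R' \<in> carrier_mat 1 d" unfolding R'_def by simp
      have RP: "R * P \<in> carrier_mat 1 d" using R P by simp
      have phiR': "phi R' z = phi R z - c * phi R (act n V dd j z)" if z: "z \<in> carrier_vec d" for z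
      proof -
        have "phi R' z = (\<Sum>col<d. R' $$ (0,col) * z $ col)" by (rule phi_row[OF R' z])
        also have "\<dots> = (\<Sum>col<d. R $$ (0,col) * z $ col) - c * (\<Sum>col<d. (R * P) $$ (0,col) * z $ col)"
          unfolding R'_def by (simp add: sum_subtractf sum_distrib_left algebra_simps)
        also have "(\<Sum>col<d. (R * P) $$ (0,col) * z $ col) = ((R * P) *\<^sub>v z) $ 0"
          using mult_vec_index[OF RP z, of 0] by simp
        also have "\<dots> = phi R (act n V dd j z)" unfolding phi_def P_def[symmetric]
          using R P z by simp
        finally show ?thesis using phi_row[OF R z] by simp
      qed
      have shift: "act n V dd j (act n V p i v) = act n V (p + dd) i v" if "p \<in> Pset n i h i" for p
      proof -
        have "(i + p) mod n = j" using that unfolding Pset_def j_def by auto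
        then show ?thesis using act_add[OF rV i v, of p dd] by simp
      qed
      have big: "phi R (act n V (p + dd) i v) = 0" if "p \<in> Pset n i h i" "p0 < p" for p
      proof -
        have "act n V (p + dd) i v = 0\<^sub>v (dims V ((i + (p+dd)) mod n))"
          using act_beyond[OF rV i v kv] that p0(2) by simp
        moreover have "(i + (p + dd)) mod n = j"
        proof -
          have "(i + (p+dd)) mod n = ((i + p) mod n + dd) mod n" by (simp add: mod_add_left_eq add.assoc)
          also have "(i+p) mod n = j" using that unfolding Pset_def j_def by auto
          finally show ?thesis using jdd by simp
        qed
        ultimately show ?thesis using R unfolding d_def by simp
      qed
      have xP: "x = act n V p0 i v" if "p0 = h" using that unfolding x_def by simp
      have hP: "h \<in> Pset n i h i" unfolding Pset_def by simp
      have "phi R' x = 1"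
      proof -
        have "phi R' x = phi R x - c * phi R (act n V (h + dd) i v)"
          using phiR'[OF x] shift[OF hP] unfolding x_def by simp
        also have "phi R (act n V (h + dd) i v) = 0" using big[OF hP] p0(2) unfolding dd_def by simp
        finally show ?thesis using Rx by simp
      qed
      moreover have "phi R' (act n V p i v) = 0" if p: "p \<in> Pset n i h i" "h - Suc K \<le> p" "p \<noteq> h" for p
      proof (cases "p = p0")
        case True
        have "phi R' (act n V p i v) = c - c * phi R (act n V (p0 + dd) i v)"
          using phiR'[OF actc[OF p(1)]] shift[OF p(1)] True unfolding c_def by simp
        then show ?thesis using p0(2) Rx unfolding x_def by simp
      next
        case False
        then have "p0 < p" using p unfolding p0_def by auto
        then have "phi R' (act n V p i v) = phi R (act n V p i v)"
          using phiR'[OF actc[OF p(1)]] shift[OF p(1)] big[OF p(1)] by simp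
        also have "\<dots> = 0" using RK[OF p(1)] p \<open>p0 < p\<close> unfolding p0_def by auto
        finally show ?thesis .
      qed
      ultimately show ?thesis using R' by blast
    qed
  qed
  obtain R where R: "R \<in> carrier_mat 1 d" and Rx: "phi R x = 1"
    and RK: "\<And>p. p \<in> Pset n i h i \<Longrightarrow> h - h \<le> p \<Longrightarrow> p \<noteq> h \<Longrightarrow> phi R (act n V p i v) = 0"
    using claim[of h] by blast
  have "\<forall>p\<in>Pset n i h i. phi R (act n V p i v) = (if p = h then 1 else 0)"
    using Rx RK unfolding x_def by auto
  then show ?thesis using R unfolding d_def j_def by blast
qed


lemma kill_l:
  fixes V :: "'a::field rep"
  assumes rV: "is_rep n l V" and k: "k < n" and z: "z \<in> carrier_vec (dims V k)" and q: "l < q"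
  shows "act n V q k z = 0\<^sub>v (dims V ((k + q) mod n))"
proof (rule act_beyond[OF rV k z _ q])
  have "path_map n V (Suc l) k = 0\<^sub>m (dims V ((k + Suc l) mod n)) (dims V k)"
    using rV k unfolding is_rep_def by auto
  then show "act n V (Suc l) k z = 0\<^sub>v (dims V ((k + Suc l) mod n))" using z by simp
qed

lemma height_exists:
  fixes V :: "'a::field rep"
  assumes ind: "indecomposable n l V"
  shows "\<exists>i<n. \<exists>v\<in>carrier_vec (dims V i). \<exists>h. act n V h i v \<noteq> 0\<^sub>v (dims V ((i+h) mod n)) \<and>
     (\<forall>k<n. \<forall>z\<in>carrier_vec (dims V k). act n V (Suc h) k z = 0\<^sub>v (dims V ((k + Suc h) mod n)))"
proof -
  have rV: "is_rep n l V" using ind unfolding indecomposable_def by auto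
  define H where "H r = (\<exists>k<n. \<exists>z\<in>carrier_vec (dims V k). act n V r k z \<noteq> 0\<^sub>v (dims V ((k+r) mod n)))" for r
  obtain k0 where k0: "k0 < n" "dims V k0 > 0" using ind unfolding indecomposable_def by auto
  have H0: "H 0"
  proof -
    let ?z = "unit_vec (dims V k0) 0 :: 'a vec"
    have "act n V 0 k0 ?z = ?z" by simp
    moreover have "?z \<noteq> 0\<^sub>v (dims V k0)"
    proof
      assume "?z = 0\<^sub>v (dims V k0)"
      then have "?z $ 0 = 0\<^sub>v (dims V k0) $ 0" by (simp only:)
      then show False using k0 by simp
    qed
    ultimately have "act n V 0 k0 ?z \<noteq> 0\<^sub>v (dims V ((k0+0) mod n))" using k0 by simp
    moreover have "?z \<in> carrier_vec (dims V k0)" by simp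
    ultimately show ?thesis unfolding H_def using k0 by blast
  qed
  have bound: "r \<le> l" if "H r" for r
  proof (rule ccontr)
    assume "\<not> r \<le> l"
    then show False using that kill_l[OF rV] unfolding H_def by auto
  qed
  define h where "h = Greatest H"
  have Hh: "H h" unfolding h_def by (rule GreatestI_nat[where P=H, OF H0 bound])
  have nH: "\<not> H (Suc h)"
  proof
    assume "H (Suc h)"
    then have "Suc h \<le> h" unfolding h_def by (rule Greatest_le_nat[where P=H, OF _ bound])
    then show False by simp
  qed
  from Hh obtain i v where "i < n" "v \<in> carrier_vec (dims V i)" "act n V h i v \<noteq> 0\<^sub>v (dims V ((i+h) mod n))"
    unfolding H_def by auto
  moreover have "\<forall>k<n. \<forall>z\<in>carrier_vec (dims V k). act n V (Suc h) k z = 0\<^sub>v (dims V ((k + Suc h) mod n))"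
    using nH unfolding H_def by auto
  ultimately show ?thesis by blast
qed


lemma radpow_vert:
  assumes k: "k < n"
  shows "((k + s*n - s) mod n + s) mod n = k"
proof -
  have "s \<le> s * n" using npos by simp
  then have e: "k + s*n - s + s = k + s*n" by linarith
  have "((k + s*n - s) mod n + s) mod n = (k + s*n - s + s) mod n" by (rule mod_add_left_eq)
  also have "\<dots> = k" using e k by simp
  finally show ?thesis .
qed

lemma vert_unique:
  assumes "a < n" "b < n" "(a + s) mod n = (b + s) mod n"
  shows "a = b"
  using mod_cancel_right[OF assms(3)] assms(1,2) by simp

lemma radpow_mem:
  fixes N :: "'a::field rep"
  assumes rN: "is_rep n l N" and k0: "k0 < n" and k: "k < n" and e: "(k0 + s) mod n = k"
    and z: "z \<in> carrier_vec (dims N k0)"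
  shows "act n N s k0 z \<in> radpow n N s k"
proof -
  have "(k + s*n - s) mod n = k0"
    using vert_unique[of "(k + s*n - s) mod n" k0 s] radpow_vert[OF k, of s] e k0 npos by simp
  then show ?thesis unfolding radpow_def Let_def using z by auto
qed

lemma radpow_elim:
  fixes N :: "'a::field rep"
  assumes y: "y \<in> radpow n N s k" and k: "k < n"
  shows "\<exists>k0<n. (k0 + s) mod n = k \<and> (\<exists>z\<in>carrier_vec (dims N k0). y = act n N s k0 z)"
proof -
  let ?k0 = "(k + s*n - s) mod n"
  have "?k0 < n" using npos by simp
  moreover have "(?k0 + s) mod n = k" by (rule radpow_vert[OF k])
  moreover have "\<exists>z\<in>carrier_vec (dims N ?k0). y = act n N s ?k0 z" using y unfolding radpow_def Let_def by auto
  ultimately show ?thesis by blast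
qed

lemma act_swap:
  fixes V :: "'a::field rep"
  assumes rV: "is_rep n l V" and k: "k < n" and z: "z \<in> carrier_vec (dims V k)"
  shows "act n V r ((k + q) mod n) (act n V q k z) = act n V q ((k + r) mod n) (act n V r k z)"
  using act_add[OF rV k z, of q r] act_add[OF rV k z, of r q] by (simp add: add.commute)

lemma rad1:
  fixes N :: "'a::field rep"
  assumes ind: "indecomposable n l N" and j: "j < n"
    and R: "R \<in> carrier_mat 1 (dims N ((j+b) mod n))"
    and w: "w \<in> carrier_vec (dims N j)"
    and norm: "\<And>p. p \<in> Pset n j b j \<Longrightarrow> phi R (act n N p j w) = (if p = b then 1 else 0)"
    and killN: "\<And>k z. k < n \<Longrightarrow> z \<in> carrier_vec (dims N k) \<Longrightarrow> act n N (Suc b) k z = 0\<^sub>v (dims N ((k + Suc b) mod n))"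
    and k: "k < n" and z: "z \<in> carrier_vec (dims N k)"
    and zb: "act n N b k z = 0\<^sub>v (dims N ((k + b) mod n))"
  shows "\<exists>k'<n. (k' + 1) mod n = k \<and> (\<exists>z'\<in>carrier_vec (dims N k'). z = act n N 1 k' z')"
proof -
  have rN: "is_rep n l N" using ind unfolding indecomposable_def by auto
  define k' where "k' = (k + 1*n - 1) mod n"
  have k': "k' < n" "(k' + 1) mod n = k" unfolding k'_def using npos radpow_vert[OF k, of 1] by auto
  define S where "S = {p \<in> Pset n j b k. p < b}"
  have S: "finite S" unfolding S_def using Pset_finite by auto
  have vS: "(j + (b - p - 1)) mod n = k'" if "p \<in> S" for p
  proof -
    have p: "p \<in> Pset n j b k" "p < b" using that unfolding S_def by auto
    have "(j + (b - p - 1) + 1) mod n = (j + (b - p)) mod n" using p(2) by (simp add: Suc_diff_Suc)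
    also have "\<dots> = k" by (rule Pset_vert[OF k p(1)])
    finally have e1: "(j + (b - p - 1) + 1) mod n = k" .
    have e2: "((j + (b - p - 1)) mod n + 1) mod n = (j + (b - p - 1) + 1) mod n" by (rule mod_add_left_eq)
    show ?thesis by (rule vert_unique[of _ k' 1]) (use e1 e2 k' npos in auto)
  qed
  define c where "c p = phi R (act n N p k z)" for p
  define z' where "z' = vec (dims N k') (\<lambda>r. \<Sum>p\<in>S. c p * (act n N (b-p-1) j w) $ r)"
  have z'c: "z' \<in> carrier_vec (dims N k')" unfolding z'_def by simp
  have uc: "act n N (b-p-1) j w \<in> carrier_vec (dims N k')" if "p \<in> S" for p
    using act_carrier[OF rN j w, of "b-p-1"] vS[OF that] by simp
  have P1: "path_map n N 1 k' \<in> carrier_mat (dims N k) (dims N k')" using path_carrier[OF rN k'(1), of 1] k' by simp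
  have "act n N 1 k' z' = vec (dims N k) (\<lambda>r. \<Sum>p\<in>S. c p * (act n N 1 k' (act n N (b-p-1) j w)) $ r)"
    unfolding z'_def by (rule mult_vec_sum[OF P1 S uc])
  also have "\<dots> = vec (dims N k) (\<lambda>r. \<Sum>p\<in>S. c p * (act n N (b-p) j w) $ r)"
  proof -
    have "act n N 1 k' (act n N (b-p-1) j w) = act n N (b-p) j w" if "p \<in> S" for p
    proof -
      have "b - p - 1 + 1 = b - p" using that unfolding S_def by auto
      then show ?thesis using act_add[OF rN j w, of "b-p-1" 1] vS[OF that] k'(1) by simp
    qed
    then show ?thesis by (intro eq_vecI) auto
  qed
  also have "\<dots> = vec (dims N k) (\<lambda>r. \<Sum>p\<in>Pset n j b k. c p * (act n N (b-p) j w) $ r)"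
  proof (intro eq_vecI)
    fix r assume r: "r < dim_vec (vec (dims N k) (\<lambda>r. \<Sum>p\<in>Pset n j b k. c p * (act n N (b-p) j w) $ r))"
    have "(\<Sum>p\<in>S. c p * (act n N (b-p) j w) $ r) = (\<Sum>p\<in>Pset n j b k. c p * (act n N (b-p) j w) $ r)"
    proof (rule sum.mono_neutral_left[OF Pset_finite])
      show "S \<subseteq> Pset n j b k" unfolding S_def by auto
      show "\<forall>p\<in>Pset n j b k - S. c p * (act n N (b-p) j w) $ r = 0"
      proof
        fix p assume p: "p \<in> Pset n j b k - S"
        then have "p = b" "(k + b) mod n = (j + b) mod n" unfolding S_def Pset_def by auto
        then have "c p = 0" unfolding c_def using zb R by simp
        then show "c p * (act n N (b-p) j w) $ r = 0" by simp
      qed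
    qed
    then show "vec (dims N k) (\<lambda>r. \<Sum>p\<in>S. c p * (act n N (b-p) j w) $ r) $ r =
        vec (dims N k) (\<lambda>r. \<Sum>p\<in>Pset n j b k. c p * (act n N (b-p) j w) $ r) $ r" using r by simp
  qed simp
  also have "\<dots> = gcons n N N j b R w k *\<^sub>v z" unfolding c_def by (simp add: gcons_mult[OF rN rN j k R w z])
  also have "\<dots> = z" using struct_id[OF ind j R w norm killN k] z by simp
  finally show ?thesis using k' z'c by metis
qed


lemma vert_add:
  fixes x y c :: nat
  assumes "x mod n = y"
  shows "(x + c) mod n = (y + c) mod n"
  using mod_add_left_eq[of x n c] assms by simp

lemma caseB:
  fixes M N :: "'a::field rep"
  assumes indM: "indecomposable n l M" and i: "i < n"
    and R: "R \<in> carrier_mat 1 (dims M ((i+h) mod n))"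
    and v: "v \<in> carrier_vec (dims M i)"
    and normM: "\<And>p. p \<in> Pset n i h i \<Longrightarrow> phi R (act n M p i v) = (if p = h then 1 else 0)"
    and killM: "\<And>k z. k < n \<Longrightarrow> z \<in> carrier_vec (dims M k) \<Longrightarrow> act n M (Suc h) k z = 0\<^sub>v (dims M ((k + Suc h) mod n))"
    and indN: "indecomposable n l N"
    and killN: "\<And>k z. k < n \<Longrightarrow> z \<in> carrier_vec (dims N k) \<Longrightarrow> act n N (Suc b) k z = 0\<^sub>v (dims N ((k + Suc b) mod n))"
    and k: "k < n" and z: "z \<in> carrier_vec (dims N k)"
    and zb: "act n N b k z \<noteq> 0\<^sub>v (dims N ((k + b) mod n))"
    and g: "is_hom n M N g" and gv: "g i *\<^sub>v v = act n N r k z" and kr: "(k + r) mod n = i"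
    and k': "k' < n"
  shows "img M g k' = radpow n N r k'"
proof -
  have rM: "is_rep n l M" using indM unfolding indecomposable_def by auto
  have rN: "is_rep n l N" using indN unfolding indecomposable_def by auto
  obtain Rz where Rz: "Rz \<in> carrier_mat 1 (dims N ((k+b) mod n))"
    and normz: "\<And>p. p \<in> Pset n k b k \<Longrightarrow> phi Rz (act n N p k z) = (if p = b then 1 else 0)"
    using norm_exists[OF rN k z zb killN[OF k z]] by blast
  have gk': "g k' \<in> carrier_mat (dims N k') (dims M k')" using g k' unfolding is_hom_def by auto
  have gi: "g i \<in> carrier_mat (dims N i) (dims M i)" using g i unfolding is_hom_def by auto
  have gvc: "g i *\<^sub>v v \<in> carrier_vec (dims N i)" using gi v by auto
  show ?thesis
  proof
    show "img M g k' \<subseteq> radpow n N r k'"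
    proof
      fix y assume "y \<in> img M g k'"
      then obtain m where m: "m \<in> carrier_vec (dims M k')" and y: "y = g k' *\<^sub>v m" unfolding img_def by auto
      define k1 where "k1 = (k' + r*n - r) mod n"
      have k1: "k1 < n" "(k1 + r) mod n = k'" unfolding k1_def using npos radpow_vert[OF k'] by auto
      have vk1: "(k + (h-p)) mod n = k1" if p: "p \<in> Pset n i h k'" for p
      proof (rule vert_unique[of _ k1 r])
        show "(k + (h-p)) mod n < n" "k1 < n" using npos k1 by auto
        have "((k + (h-p)) mod n + r) mod n = (k + (h-p) + r) mod n" by (rule mod_add_left_eq)
        also have "\<dots> = (k + r + (h-p)) mod n" by (simp add: add_ac)
        also have "\<dots> = (i + (h-p)) mod n" using vert_add[OF kr] by simp
        also have "\<dots> = k'" by (rule Pset_vert[OF k' p])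
        finally show "((k + (h-p)) mod n + r) mod n = (k1 + r) mod n" using k1 by simp
      qed
      have u: "act n N (h-p) k z \<in> carrier_vec (dims N k1)" if "p \<in> Pset n i h k'" for p
        using act_carrier[OF rN k z, of "h-p"] vk1[OF that] by simp
      have Pr: "path_map n N r k1 \<in> carrier_mat (dims N k') (dims N k1)" using path_carrier[OF rN k1(1), of r] k1 by simp
      have "y = gcons n M N i h R (g i *\<^sub>v v) k' *\<^sub>v m" using y hom_det[OF indM rN i R v normM killM g k'] by simp
      also have "\<dots> = vec (dims N k') (\<lambda>rr. \<Sum>p\<in>Pset n i h k'. phi R (act n M p k' m) * (act n N (h-p) i (g i *\<^sub>v v)) $ rr)"
        by (rule gcons_mult[OF rM rN i k' R gvc m])
      also have "\<dots> = vec (dims N k') (\<lambda>rr. \<Sum>p\<in>Pset n i h k'. phi R (act n M p k' m) * (act n N r k1 (act n N (h-p) k z)) $ rr)"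
      proof -
        have "act n N (h-p) i (g i *\<^sub>v v) = act n N r k1 (act n N (h-p) k z)" if "p \<in> Pset n i h k'" for p
          using act_swap[OF rN k z, of r "h-p"] vk1[OF that] kr gv by simp
        then show ?thesis by (intro eq_vecI) auto
      qed
      also have "\<dots> = act n N r k1 (vec (dims N k1) (\<lambda>rr. \<Sum>p\<in>Pset n i h k'. phi R (act n M p k' m) * (act n N (h-p) k z) $ rr))"
        by (rule mult_vec_sum[OF Pr Pset_finite u, symmetric])
      also have "\<dots> \<in> radpow n N r k'"
        by (rule radpow_mem[OF rN k1(1) k' k1(2)]) simp
      finally show "y \<in> radpow n N r k'" .
    qed
  next
    show "radpow n N r k' \<subseteq> img M g k'"
    proof
      fix y assume "y \<in> radpow n N r k'"
      then obtain k0 z0 where k0: "k0 < n" "(k0 + r) mod n = k'" and z0: "z0 \<in> carrier_vec (dims N k0)"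
        and y: "y = act n N r k0 z0" using radpow_elim[OF _ k'] by blast
      have Pr: "path_map n N r k0 \<in> carrier_mat (dims N k') (dims N k0)" using path_carrier[OF rN k0(1), of r] k0 by simp
      have vk0: "(k + (b-p)) mod n = k0" if "p \<in> Pset n k b k0" for p by (rule Pset_vert[OF k0(1) that])
      have vik: "(i + (b-p)) mod n = k'" if p: "p \<in> Pset n k b k0" for p
      proof -
        have "(i + (b-p)) mod n = (k + r + (b-p)) mod n" using vert_add[OF kr, of "b-p"] by simp
        also have "\<dots> = ((k + (b-p)) + r) mod n" by (simp add: add_ac)
        also have "\<dots> = (k0 + r) mod n" using vert_add[OF vk0[OF p], of r] by simp
        finally show ?thesis using k0 by simp
      qed
      have u: "act n N (b-p) k z \<in> carrier_vec (dims N k0)" if "p \<in> Pset n k b k0" for p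
        using act_carrier[OF rN k z, of "b-p"] vk0[OF that] by simp
      have mc: "act n M (b-p) i v \<in> carrier_vec (dims M k')" if "p \<in> Pset n k b k0" for p
        using act_carrier[OF rM i v, of "b-p"] vik[OF that] by simp
      have "z0 = gcons n N N k b Rz z k0 *\<^sub>v z0" using struct_id[OF indN k Rz z normz killN k0(1)] z0 by simp
      also have "\<dots> = vec (dims N k0) (\<lambda>rr. \<Sum>p\<in>Pset n k b k0. phi Rz (act n N p k0 z0) * (act n N (b-p) k z) $ rr)"
        by (rule gcons_mult[OF rN rN k k0(1) Rz z z0])
      finally have z0e: "z0 = \<dots>" .
      have "y = vec (dims N k') (\<lambda>rr. \<Sum>p\<in>Pset n k b k0. phi Rz (act n N p k0 z0) * (act n N r k0 (act n N (b-p) k z)) $ rr)"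
        unfolding y by (subst z0e) (rule mult_vec_sum[OF Pr Pset_finite u])
      also have "\<dots> = vec (dims N k') (\<lambda>rr. \<Sum>p\<in>Pset n k b k0. phi Rz (act n N p k0 z0) * (g k' *\<^sub>v act n M (b-p) i v) $ rr)"
      proof -
        have "act n N r k0 (act n N (b-p) k z) = g k' *\<^sub>v act n M (b-p) i v" if p: "p \<in> Pset n k b k0" for p
        proof -
          have "act n N r k0 (act n N (b-p) k z) = act n N (b-p) i (act n N r k z)"
            using act_swap[OF rN k z, of r "b-p"] vk0[OF p] kr by simp
          also have "\<dots> = g ((i + (b-p)) mod n) *\<^sub>v act n M (b-p) i v"
            using hom_act[OF rM rN g i v, of "b-p"] gv by simp
          finally show ?thesis using vik[OF p] by simp
        qed
        then show ?thesis by (intro eq_vecI) auto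
      qed
      also have "\<dots> = g k' *\<^sub>v vec (dims M k') (\<lambda>rr. \<Sum>p\<in>Pset n k b k0. phi Rz (act n N p k0 z0) * (act n M (b-p) i v) $ rr)"
        by (rule mult_vec_sum[OF gk' Pset_finite mc, symmetric])
      finally show "y \<in> img M g k'" unfolding img_def by auto
    qed
  qed
qed


lemma stepA:
  fixes M N :: "'a::field rep"
  assumes indM: "indecomposable n l M" and i: "i < n"
    and R: "R \<in> carrier_mat 1 (dims M ((i+h) mod n))"
    and v: "v \<in> carrier_vec (dims M i)"
    and normM: "\<And>p. p \<in> Pset n i h i \<Longrightarrow> phi R (act n M p i v) = (if p = h then 1 else 0)"
    and killM: "\<And>k z. k < n \<Longrightarrow> z \<in> carrier_vec (dims M k) \<Longrightarrow> act n M (Suc h) k z = 0\<^sub>v (dims M ((k + Suc h) mod n))"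
    and indN: "indecomposable n l N"
    and g: "is_hom n M N g"
    and hyp: "\<forall>s<t. \<not> (\<exists>g. is_hom n M N g \<and> (\<forall>i<n. img M g i = radpow n N s i))"
  shows "g i *\<^sub>v v \<in> radpow n N t i"
proof -
  have rM: "is_rep n l M" using indM unfolding indecomposable_def by auto
  have rN: "is_rep n l N" using indN unfolding indecomposable_def by auto
  obtain j w0 b where j: "j < n" and w0: "w0 \<in> carrier_vec (dims N j)"
    and hw: "act n N b j w0 \<noteq> 0\<^sub>v (dims N ((j+b) mod n))"
    and killN: "\<And>k z. k < n \<Longrightarrow> z \<in> carrier_vec (dims N k) \<Longrightarrow> act n N (Suc b) k z = 0\<^sub>v (dims N ((k + Suc b) mod n))"
    using height_exists[OF indN] by blast
  obtain RN where RN: "RN \<in> carrier_mat 1 (dims N ((j+b) mod n))"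
    and normN: "\<And>p. p \<in> Pset n j b j \<Longrightarrow> phi RN (act n N p j w0) = (if p = b then 1 else 0)"
    using norm_exists[OF rN j w0 hw killN[OF j w0]] by blast
  have gi: "g i \<in> carrier_mat (dims N i) (dims M i)" using g i unfolding is_hom_def by auto
  have gvc: "g i *\<^sub>v v \<in> carrier_vec (dims N i)" using gi v by auto
  have "r \<le> t \<longrightarrow> g i *\<^sub>v v \<in> radpow n N r i" for r
  proof (induction r)
    case 0
    have "act n N 0 i (g i *\<^sub>v v) \<in> radpow n N 0 i" by (rule radpow_mem[OF rN i i _ gvc]) (use i in simp)
    then show ?case using gvc by simp
  next
    case (Suc r)
    show ?case
    proof
      assume rt: "Suc r \<le> t"
      then have "g i *\<^sub>v v \<in> radpow n N r i" using Suc by simp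
      then obtain k z where k: "k < n" "(k + r) mod n = i" and z: "z \<in> carrier_vec (dims N k)"
        and gv: "g i *\<^sub>v v = act n N r k z" using radpow_elim[OF _ i] by blast
      show "g i *\<^sub>v v \<in> radpow n N (Suc r) i"
      proof (cases "act n N b k z = 0\<^sub>v (dims N ((k + b) mod n))")
        case True
        obtain k' z' where k': "k' < n" "(k' + 1) mod n = k" and z': "z' \<in> carrier_vec (dims N k')"
          and ze: "z = act n N 1 k' z'"
          using rad1[OF indN j RN w0 normN killN k(1) z True] by blast
        have "g i *\<^sub>v v = act n N (1 + r) k' z'" using gv ze act_add[OF rN k'(1) z', of 1 r] k' by simp
        moreover have "(k' + (1 + r)) mod n = i"
        proof -
          have "(k' + (1 + r)) mod n = ((k' + 1) mod n + r) mod n" by (simp only: mod_add_left_eq add.assoc)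
          also have "\<dots> = (k + r) mod n" using k'(2) by (simp only:)
          finally show ?thesis using k(2) by simp
        qed
        ultimately show ?thesis using radpow_mem[OF rN k'(1) i _ z', of "1 + r"] by simp
      next
        case False
        have "\<forall>k'<n. img M g k' = radpow n N r k'"
          using caseB[OF indM i R v normM killM indN killN k(1) z False g gv k(2)] by blast
        moreover have "r < t" using rt by simp
        ultimately show ?thesis using hyp g by blast
      qed
    qed
  qed
  then show ?thesis by blast
qed

lemma hom_comp:
  fixes V W Y :: "'a::field rep"
  assumes rV: "is_rep n l V" and rW: "is_rep n l W" and rY: "is_rep n l Y"
    and F: "is_hom n V W F" and G: "is_hom n W Y G"
  shows "is_hom n V Y (\<lambda>k. G k * F k)"
  unfolding is_hom_def
proof (intro conjI allI impI)
  fix k assume k: "k < n"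
  have Fk: "F k \<in> carrier_mat (dims W k) (dims V k)" using F k unfolding is_hom_def by auto
  have Gk: "G k \<in> carrier_mat (dims Y k) (dims W k)" using G k unfolding is_hom_def by auto
  show "G k * F k \<in> carrier_mat (dims Y k) (dims V k)" using Fk Gk by simp
  let ?k1 = "nxt n k"
  have k1: "?k1 < n" using npos unfolding nxt_def by auto
  have Fk1: "F ?k1 \<in> carrier_mat (dims W ?k1) (dims V ?k1)" using F k1 unfolding is_hom_def by auto
  have Gk1: "G ?k1 \<in> carrier_mat (dims Y ?k1) (dims W ?k1)" using G k1 unfolding is_hom_def by auto
  have mV: "maps V k \<in> carrier_mat (dims V ?k1) (dims V k)" using rV k unfolding is_rep_def by auto
  have mW: "maps W k \<in> carrier_mat (dims W ?k1) (dims W k)" using rW k unfolding is_rep_def by auto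
  have mY: "maps Y k \<in> carrier_mat (dims Y ?k1) (dims Y k)" using rY k unfolding is_rep_def by auto
  have cF: "F ?k1 * maps V k = maps W k * F k" using F k unfolding is_hom_def by auto
  have cG: "G ?k1 * maps W k = maps Y k * G k" using G k unfolding is_hom_def by auto
  have "G ?k1 * F ?k1 * maps V k = G ?k1 * (F ?k1 * maps V k)" using Gk1 Fk1 mV by simp
  also have "\<dots> = G ?k1 * (maps W k * F k)" using cF by simp
  also have "\<dots> = (G ?k1 * maps W k) * F k" using Gk1 mW Fk by simp
  also have "\<dots> = (maps Y k * G k) * F k" using cG by simp
  also have "\<dots> = maps Y k * (G k * F k)" using mY Gk Fk by simp
  finally show "G ?k1 * F ?k1 * maps V k = maps Y k * (G k * F k)" .
qed

end

theorem lemma2p8: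
  fixes n l t :: nat and M N :: "'a::field rep" and f :: "nat \<Rightarrow> 'a mat"
  assumes "alg_closed_type TYPE('a)"
    and "n \<ge> 1"
    and "indecomposable n l M" and "indecomposable n l N"
    and "\<not> projective n l M" and "\<not> projective n l N"
    and "is_hom n M N f" and "\<not> zero_mor n M N f"
    and "\<forall>i<n. img M f i = radpow n N t i"
    and "\<forall>s<t. \<not> (\<exists>g. is_hom n M N g \<and> (\<forall>i<n. img M g i = radpow n N s i))"
  shows "stably_zero n l M N f \<longleftrightarrow> stable_hom_zero n l M N"
proof
  assume "stable_hom_zero n l M N"
  then show "stably_zero n l M N f" using assms(7) unfolding stable_hom_zero_def by blast
next
  assume sz: "stably_zero n l M N f"
  have npos: "0 < n" using assms(2) by simp
  note indM = assms(3) and indN = assms(4) and fh = assms(7) and fimg = assms(9) and hyp = assms(10)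
  have rM: "is_rep n l M" using indM unfolding indecomposable_def by auto
  have rN: "is_rep n l N" using indN unfolding indecomposable_def by auto
  obtain P G0 H where P: "projective n l P" and G0: "is_hom n M P G0" and H: "is_hom n P N H"
    and fe: "\<And>i. i < n \<Longrightarrow> f i = H i * G0 i"
    using sz unfolding stably_zero_def by blast
  have rP: "is_rep n l P" using P unfolding projective_def by auto
  obtain i v h where i: "i < n" and v: "v \<in> carrier_vec (dims M i)"
    and hv: "act n M h i v \<noteq> 0\<^sub>v (dims M ((i+h) mod n))"
    and killM: "\<And>k z. k < n \<Longrightarrow> z \<in> carrier_vec (dims M k) \<Longrightarrow> act n M (Suc h) k z = 0\<^sub>v (dims M ((k + Suc h) mod n))"
    using height_exists[OF npos indM] by blast
  obtain R where R: "R \<in> carrier_mat 1 (dims M ((i+h) mod n))"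
    and normM: "\<And>p. p \<in> Pset n i h i \<Longrightarrow> phi R (act n M p i v) = (if p = h then 1 else 0)"
    using norm_exists[OF npos rM i v hv killM[OF i v]] by blast
  show "stable_hom_zero n l M N"
    unfolding stable_hom_zero_def
  proof (intro allI impI)
    fix g assume g: "is_hom n M N g"
    have "g i *\<^sub>v v \<in> radpow n N t i"
      by (rule stepA[OF npos indM i R v normM killM indN g hyp])
    then have "g i *\<^sub>v v \<in> img M f i" using fimg i by simp
    then obtain u where u: "u \<in> carrier_vec (dims M i)" and fu: "f i *\<^sub>v u = g i *\<^sub>v v"
      unfolding img_def by auto
    have G0i: "G0 i \<in> carrier_mat (dims P i) (dims M i)" using G0 i unfolding is_hom_def by auto
    have Hi: "H i \<in> carrier_mat (dims N i) (dims P i)" using H i unfolding is_hom_def by auto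
    define y where "y = G0 i *\<^sub>v u"
    have y: "y \<in> carrier_vec (dims P i)" unfolding y_def using G0i u by auto
    have ky: "act n P (Suc h) i y = 0\<^sub>v (dims P ((i + Suc h) mod n))"
    proof -
      have ih: "(i + Suc h) mod n < n" using npos by simp
      have G0c: "G0 ((i + Suc h) mod n) \<in> carrier_mat (dims P ((i + Suc h) mod n)) (dims M ((i + Suc h) mod n))"
        using G0 ih unfolding is_hom_def by auto
      have "act n P (Suc h) i y = G0 ((i + Suc h) mod n) *\<^sub>v act n M (Suc h) i u"
        unfolding y_def using hom_act[OF npos rM rP G0 i u, of "Suc h"] by simp
      also have "\<dots> = 0\<^sub>v (dims P ((i + Suc h) mod n))" using killM[OF i u] G0c by simp
      finally show ?thesis .
    qed
    define G0' where "G0' = gcons n M P i h R y"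
    have G0': "is_hom n M P G0'" unfolding G0'_def by (rule gcons_hom[OF npos rM rP i R y killM ky])
    define C where "C k = H k * G0' k" for k
    have C: "is_hom n M N C" unfolding C_def by (rule hom_comp[OF npos rM rP rN G0' H])
    have Cv: "C i *\<^sub>v v = g i *\<^sub>v v"
    proof -
      have G0'c: "G0' i \<in> carrier_mat (dims P i) (dims M i)" unfolding G0'_def by (rule gcons_carrier[OF npos])
      have "C i *\<^sub>v v = H i *\<^sub>v (G0' i *\<^sub>v v)" unfolding C_def by (rule assoc_mult_mat_vec[OF Hi G0'c v])
      also have "G0' i *\<^sub>v v = y" unfolding G0'_def by (rule gcons_at[OF npos rM rP i R y v normM])
      also have "H i *\<^sub>v y = (H i * G0 i) *\<^sub>v u" unfolding y_def using Hi G0i u by simp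
      also have "\<dots> = f i *\<^sub>v u" using fe[OF i] by simp
      finally show ?thesis using fu by simp
    qed
    have "\<forall>k<n. g k = H k * G0' k"
    proof (intro allI impI)
      fix k assume k: "k < n"
      have "g k = gcons n M N i h R (g i *\<^sub>v v) k" by (rule hom_det[OF npos indM rN i R v normM killM g k])
      also have "\<dots> = gcons n M N i h R (C i *\<^sub>v v) k" using Cv by simp
      also have "\<dots> = C k" by (rule hom_det[OF npos indM rN i R v normM killM C k, symmetric])
      finally show "g k = H k * G0' k" unfolding C_def .
    qed
    then show "stably_zero n l M N g" unfolding stably_zero_def using P G0' H by blast
  qed
qed

end
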